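(* Let $(Q,\star)$ be a left-non-degenerate weak RC-system on a quiver $Q$ over $\Lambda$. Then its completion $(\hat Q,\hat\star)$ is a unital weak RC-system, whose unit family is the family $\{\epsilon_\lambda\}_{\lambda\in\Lambda}$ of inserted loops.
   Context: A weak RC-system $(Q,\star)$ is a quiver with partial operation such that: $x\star y$ defined only if $\mathfrak{s}(x)=\mathfrak{s}(y)$; if $x\star y$ is defined then $y\star x$ is defined, $\mathfrak{s}(x\star y)=\mathfrak{t}(x)$, $\mathfrak{s}(y\star x)=\mathfrak{t}(y)$, $\mathfrak{t}(x\star y)=\mathfrak{t}(y\star x)$; and if $x\star y$, $x\star z$, $(x\star y)\star(x\star z)$ are defined then $y\star z$, $(y\star x)\star(y\star z)$ are defined and $(x\star y)\star(x\star z)=(y\star x)\star(y\star z)$. Left-non-degenerate: each $x\star\cdot\colon Q(\mathfrak{s}(x),\Lambda)\to Q(\mathfrak{t}(x),\Lambda)$ is a bijection. The completion $(\hat Q,\hat\star)$: $\hat Q=Q\cup\{\epsilon_\lambda\mid\lambda\in\Lambda\}$ with new loops $\epsilon_\lambda\colon\lambda\to\lambda$ not in $Q$, and $\epsilon_{\mathfrak{s}(y)}\hat\star y:=y$, $x\hat\star\epsilon_{\mathfrak{s}(x)}:=\epsilon_{\mathfrak{t}(x)}$, $x\hat\star x:=\epsilon_{\mathfrak{t}(x)}$, $x\hat\star y:=x\star y$ in all remaining cases. A unit family of a weak RC-system is a family of loops $\epsilon_\lambda\in Q(\lambda,\lambda)$ such that, for all $x$, $x\star\epsilon_{\mathfrak{s}(x)}=\epsilon_{\mathfrak{t}(x)}$,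 $\epsilon_{\mathfrak{s}(x)}\star x=x$ and $x\star x=\epsilon_{\mathfrak{t}(x)}$ (all defined). The system is unital if it has a unit family and for all $x,y$ with common target $\mu$, $x\star y=y\star x=\epsilon_\mu$ implies $x=y$. *)

theory Defs
  imports Main
begin

text \<open>A quiver over the vertex set V (= Lambda): arrow set A with source s and target t.
  A partial binary operation on arrows is a function returning an option.\<close>

definition quiver :: "'v set \<Rightarrow> 'a set \<Rightarrow> ('a \<Rightarrow> 'v) \<Rightarrow> ('a \<Rightarrow> 'v) \<Rightarrow> bool" where
  "quiver V A s t \<longleftrightarrow> (\<forall>x\<in>A. s x \<in> V \<and> t x \<in> V)"

definition weak_RC_system ::
  "'v set \<Rightarrow> 'a set \<Rightarrow> ('a \<Rightarrow> 'v) \<Rightarrow> ('a \<Rightarrow> 'v) \<Rightarrow> ('a \<Rightarrow> 'a \<Rightarrow> 'a option) \<Rightarrow> bool" where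
  "weak_RC_system V A s t star \<longleftrightarrow>
     quiver V A s t \<and>
     (\<forall>x y z. star x y = Some z \<longrightarrow> x \<in> A \<and> y \<in> A \<and> z \<in> A) \<and>
     (\<forall>x\<in>A. \<forall>y\<in>A. star x y \<noteq> None \<longrightarrow> s x = s y) \<and>
     (\<forall>x\<in>A. \<forall>y\<in>A. star x y \<noteq> None \<longrightarrow>
         star y x \<noteq> None \<and>
         s (the (star x y)) = t x \<and> s (the (star y x)) = t y \<and>
         t (the (star x y)) = t (the (star y x))) \<and>
     (\<forall>x\<in>A. \<forall>y\<in>A. \<forall>z\<in>A.
         star x y \<noteq> None \<and> star x z \<noteq> None \<and>
         star (the (star x y)) (the (star x z)) \<noteq> None \<longrightarrow>
           star y z \<noteq> None \<and> star (the (star y x)) (the (star y z)) \<noteq> None \<and>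
           star (the (star x y)) (the (star x z)) = star (the (star y x)) (the (star y z)))"

definition left_non_degenerate ::
  "'v set \<Rightarrow> 'a set \<Rightarrow> ('a \<Rightarrow> 'v) \<Rightarrow> ('a \<Rightarrow> 'v) \<Rightarrow> ('a \<Rightarrow> 'a \<Rightarrow> 'a option) \<Rightarrow> bool" where
  "left_non_degenerate V A s t star \<longleftrightarrow>
     (\<forall>x\<in>A. (\<forall>y\<in>A. s y = s x \<longrightarrow> star x y \<noteq> None) \<and>
        bij_betw (\<lambda>y. the (star x y)) {y\<in>A. s y = s x} {z\<in>A. s z = t x})"

definition unit_family ::
  "'v set \<Rightarrow> 'a set \<Rightarrow> ('a \<Rightarrow> 'v) \<Rightarrow> ('a \<Rightarrow> 'v) \<Rightarrow> ('a \<Rightarrow> 'a \<Rightarrow> 'a option) \<Rightarrow> ('v \<Rightarrow> 'a) \<Rightarrow> bool" where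
  "unit_family V A s t star e \<longleftrightarrow>
     (\<forall>l\<in>V. e l \<in> A \<and> s (e l) = l \<and> t (e l) = l) \<and>
     (\<forall>x\<in>A. star x (e (s x)) = Some (e (t x)) \<and>
             star (e (s x)) x = Some x \<and>
             star x x = Some (e (t x)))"

definition unital ::
  "'v set \<Rightarrow> 'a set \<Rightarrow> ('a \<Rightarrow> 'v) \<Rightarrow> ('a \<Rightarrow> 'v) \<Rightarrow> ('a \<Rightarrow> 'a \<Rightarrow> 'a option) \<Rightarrow> bool" where
  "unital V A s t star \<longleftrightarrow>
     (\<exists>e. unit_family V A s t star e \<and>
        (\<forall>x\<in>A. \<forall>y\<in>A. t x = t y \<and> star x y = Some (e (t x)) \<and> star y x = Some (e (t x))
            \<longrightarrow> x = y))"

text \<open>Completion: arrows are Inl x (x an original arrow) and Inr \<lambda> (the new loop \<epsilon>_\<lambda>).\<close>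
definition compl_arrows :: "'v set \<Rightarrow> 'a set \<Rightarrow> ('a + 'v) set" where
  "compl_arrows V A = Inl ` A \<union> Inr ` V"

fun compl_src :: "('a \<Rightarrow> 'v) \<Rightarrow> 'a + 'v \<Rightarrow> 'v" where
  "compl_src s (Inl x) = s x"
| "compl_src s (Inr l) = l"

fun compl_tgt :: "('a \<Rightarrow> 'v) \<Rightarrow> 'a + 'v \<Rightarrow> 'v" where
  "compl_tgt t (Inl x) = t x"
| "compl_tgt t (Inr l) = l"

fun compl_star ::
  "'v set \<Rightarrow> 'a set \<Rightarrow> ('a \<Rightarrow> 'v) \<Rightarrow> ('a \<Rightarrow> 'v) \<Rightarrow> ('a \<Rightarrow> 'a \<Rightarrow> 'a option)
    \<Rightarrow> 'a + 'v \<Rightarrow> 'a + 'v \<Rightarrow> ('a + 'v) option" where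
  "compl_star V A s t star (Inr l) (Inr m) =
     (if l \<in> V \<and> m = l then Some (Inr l) else None)"
| "compl_star V A s t star (Inr l) (Inl y) =
     (if y \<in> A \<and> l \<in> V \<and> s y = l then Some (Inl y) else None)"
| "compl_star V A s t star (Inl x) (Inr l) =
     (if x \<in> A \<and> l \<in> V \<and> s x = l then Some (Inr (t x)) else None)"
| "compl_star V A s t star (Inl x) (Inl y) =
     (if x \<in> A \<and> y \<in> A \<and> s x = s y then
        (if x = y then Some (Inr (t x)) else map_option Inl (star x y))
      else None)"

end

theory Submission
  imports Defs
begin

locale lnd_sys =
  fixes V :: "'v set" and A :: "'a set" and s t :: "'a \<Rightarrow> 'v"
    and star :: "'a \<Rightarrow> 'a \<Rightarrow> 'a option"
  assumes W: "weak_RC_system V A s t star"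
    and L: "left_non_degenerate V A s t star"
begin

lemma Q: "x \<in> A \<Longrightarrow> s x \<in> V \<and> t x \<in> V"
  using W unfolding weak_RC_system_def quiver_def by blast

lemma clo: "star x y = Some z \<Longrightarrow> z \<in> A"
  using W unfolding weak_RC_system_def by blast

lemma dfd: "x \<in> A \<Longrightarrow> y \<in> A \<Longrightarrow> s x = s y \<Longrightarrow> \<exists>z. star x y = Some z"
  using L unfolding left_non_degenerate_def by fastforce

lemma src: "x \<in> A \<Longrightarrow> y \<in> A \<Longrightarrow> star x y = Some z \<Longrightarrow> s z = t x"
  using W unfolding weak_RC_system_def by (metis option.sel option.simps(3))

lemma tgt: "x \<in> A \<Longrightarrow> y \<in> A \<Longrightarrow> star x y = Some u \<Longrightarrow> star y x = Some v \<Longrightarrow> t u = t v"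
  using W unfolding weak_RC_system_def by (metis option.sel option.simps(3))

lemma inj: "x \<in> A \<Longrightarrow> y \<in> A \<Longrightarrow> z \<in> A \<Longrightarrow> s y = s x \<Longrightarrow> s z = s x
   \<Longrightarrow> star x y = star x z \<Longrightarrow> y = z"
proof -
  assume a: "x \<in> A" "y \<in> A" "z \<in> A" "s y = s x" "s z = s x" "star x y = star x z"
  have "inj_on (\<lambda>y. the (star x y)) {y\<in>A. s y = s x}"
    using L a(1) unfolding left_non_degenerate_def bij_betw_def by blast
  moreover have "the (star x y) = the (star x z)" using a by simp
  ultimately show "y = z" using a by (metis (mono_tags, lifting) inj_onD mem_Collect_eq)
qed

lemma cube: "x \<in> A \<Longrightarrow> y \<in> A \<Longrightarrow> z \<in> A \<Longrightarrow> star x y = Some a \<Longrightarrow> star x z = Some b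
  \<Longrightarrow> star y x = Some c \<Longrightarrow> star y z = Some d \<Longrightarrow> star a b = star c d"
proof -
  assume h: "x \<in> A" "y \<in> A" "z \<in> A" "star x y = Some a" "star x z = Some b"
    "star y x = Some c" "star y z = Some d"
  have "a \<in> A" "b \<in> A" using h clo by auto
  moreover have "s a = s b" using h src by metis
  ultimately obtain r where "star a b = Some r" using dfd by blast
  then show ?thesis using W h unfolding weak_RC_system_def
    by (metis option.sel option.simps(3))
qed

lemma sA: "x \<in> A \<Longrightarrow> y \<in> A \<Longrightarrow> s x = s y \<Longrightarrow> \<exists>d. star x y = Some d \<and> d \<in> A \<and> s d = t x"
  using dfd clo src by metis

abbreviation "C \<equiv> compl_arrows V A"
abbreviation "cs \<equiv> compl_star V A s t star"
abbreviation "S \<equiv> compl_src s"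
abbreviation "T \<equiv> compl_tgt t"

lemma cs_none: "cs X Y \<noteq> None \<longleftrightarrow> X \<in> C \<and> Y \<in> C \<and> S X = S Y"
  by (cases X; cases Y) (auto simp: compl_arrows_def dest: dfd)

lemma cs_C: "cs X Y = Some Z \<Longrightarrow> Z \<in> C"
  by (cases X; cases Y) (auto simp: compl_arrows_def split: if_splits dest: Q clo)

lemma cs_src: "cs X Y = Some Z \<Longrightarrow> S Z = T X"
  by (cases X; cases Y) (auto split: if_splits dest: src)

lemma cs_tgt: "cs X Y = Some Z \<Longrightarrow> cs Y X = Some Z' \<Longrightarrow> T Z = T Z'"
  by (cases X; cases Y) (auto split: if_splits dest: tgt)

lemma cs_cube:
  assumes "X \<in> C" "Y \<in> C" "Z \<in> C" "S X = S Y" "S X = S Z"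
  shows "cs (the (cs X Y)) (the (cs X Z)) = cs (the (cs Y X)) (the (cs Y Z))"
proof (cases "X = Y")
  case True then show ?thesis by simp
next
  case False
  show ?thesis
  proof (cases X)
    case (Inr l)
    then show ?thesis using assms False
      apply (cases Y; cases Z)
         apply (auto simp: compl_arrows_def dest: Q)
      subgoal for y z
      proof -
        assume h: "s y = s z" "y \<in> A" "z \<in> A"
        then obtain d where "star y z = Some d" "d \<in> A" "s d = t y" using sA by metis
        then show ?thesis using h Q by auto
      qed
      done
  next
    case (Inl x)
    note X = this
    show ?thesis
    proof (cases Y)
      case (Inr m)
      then show ?thesis using assms False X
        apply (cases Z)
         apply (auto simp: compl_arrows_def dest: Q)
        subgoal for z
        proof -
          assume h: "s x = s z" "x \<in> A" "z \<in> A"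
          then obtain d where "star x z = Some d" "d \<in> A" "s d = t x" using sA by metis
          then show ?thesis using h Q by auto
        qed
        done
    next
      case (Inl y)
      note Y = this
      show ?thesis
      proof (cases Z)
        case (Inr n)
        have xy: "x \<in> A" "y \<in> A" "s y = s x" "x \<noteq> y" "n = s x" "n \<in> V"
          using assms X Y Inr False by (auto simp: compl_arrows_def)
        obtain a c where ac: "star x y = Some a" "star y x = Some c"
          using dfd xy by metis
        have "a \<in> A" "c \<in> A" "s a = t x" "s c = t y" "t a = t c"
          using clo[OF ac(1)] clo[OF ac(2)] src[OF xy(1,2) ac(1)] src[OF xy(2,1) ac(2)]
            tgt[OF xy(1,2) ac] by auto
        with ac show ?thesis using X Y Inr xy Q by auto
      next
        case (Inl z)
        have xyz: "x \<in> A" "y \<in> A" "z \<in> A" "s y = s x" "s z = s x" "x \<noteq> y"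
          using assms X Y Inl False by (auto simp: compl_arrows_def)
        obtain a c where ac: "star x y = Some a" "star y x = Some c"
          using dfd xyz by metis
        have acA: "a \<in> A" "c \<in> A" "s a = t x" "s c = t y" "t a = t c"
          using clo[OF ac(1)] clo[OF ac(2)] src[OF xyz(1,2) ac(1)] src[OF xyz(2,1) ac(2)]
            tgt[OF xyz(1,2) ac] by auto
        show ?thesis
        proof (cases "z = x")
          case True
          then show ?thesis using X Y Inl xyz ac acA Q by auto
        next
          case zx: False
          show ?thesis
          proof (cases "z = y")
            case True
            then show ?thesis using X Y Inl xyz ac acA Q by auto
          next
            case False
            obtain b d where bd: "star x z = Some b" "star y z = Some d"
              using dfd xyz by metis
            have "b \<noteq> a" using inj[of x y z] xyz ac bd False by auto
            moreover have "d \<noteq> c" using inj[of y x z] xyz ac bd zx by auto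
            moreover have "b \<in> A" "d \<in> A" "s b = t x" "s d = t y"
              using clo[OF bd(1)] clo[OF bd(2)] src[OF xyz(1,3) bd(1)] src[OF xyz(2,3) bd(2)] by auto
            moreover have "star a b = star c d" using cube xyz ac bd by blast
            ultimately show ?thesis using X Y Inl xyz ac acA False zx bd by auto
          qed
        qed
      qed
    qed
  qed
qed

end

theorem lemma3p8:
  fixes V :: "'v set" and A :: "'a set" and s t :: "'a \<Rightarrow> 'v"
    and star :: "'a \<Rightarrow> 'a \<Rightarrow> 'a option"
  assumes "weak_RC_system V A s t star"
    and "left_non_degenerate V A s t star"
  shows "weak_RC_system V (compl_arrows V A) (compl_src s) (compl_tgt t) (compl_star V A s t star)
       \<and> unital V (compl_arrows V A) (compl_src s) (compl_tgt t) (compl_star V A s t star)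
       \<and> unit_family V (compl_arrows V A) (compl_src s) (compl_tgt t) (compl_star V A s t star) Inr"
proof -
  interpret lnd_sys V A s t star using assms by unfold_locales
  have w: "weak_RC_system V C S T cs"
    unfolding weak_RC_system_def
  proof (intro conjI)
    show "quiver V C S T" unfolding quiver_def compl_arrows_def using Q by auto
    show "\<forall>x y z. cs x y = Some z \<longrightarrow> x \<in> C \<and> y \<in> C \<and> z \<in> C"
      proof (intro allI impI)
      fix x y z assume h: "cs x y = Some z"
      then have "cs x y \<noteq> None" by simp
      then have xy: "x \<in> C \<and> y \<in> C" using cs_none[of x y] by simp
      have zC: "z \<in> C" by (rule cs_C) (rule h)
      from xy zC show "x \<in> C \<and> y \<in> C \<and> z \<in> C" by blast
    qed
    show "\<forall>x\<in>C. \<forall>y\<in>C. cs x y \<noteq> None \<longrightarrow> S x = S y"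
      using cs_none by blast
    show "\<forall>x\<in>C. \<forall>y\<in>C. cs x y \<noteq> None \<longrightarrow> cs y x \<noteq> None \<and>
         S (the (cs x y)) = T x \<and> S (the (cs y x)) = T y \<and>
         T (the (cs x y)) = T (the (cs y x))"
    proof (intro ballI impI conjI)
      fix x y assume h: "x \<in> C" "y \<in> C" "cs x y \<noteq> None"
      then show h2: "cs y x \<noteq> None" using cs_none by metis
      obtain u where u: "cs x y = Some u" using h(3) by blast
      obtain v where v: "cs y x = Some v" using h2 by blast
      show "S (the (cs x y)) = T x" using cs_src[OF u] u by simp
      show "S (the (cs y x)) = T y" using cs_src[OF v] v by simp
      show "T (the (cs x y)) = T (the (cs y x))" using cs_tgt[OF u v] u v by simp
    qed
    show "\<forall>x\<in>C. \<forall>y\<in>C. \<forall>z\<in>C.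
         cs x y \<noteq> None \<and> cs x z \<noteq> None \<and> cs (the (cs x y)) (the (cs x z)) \<noteq> None \<longrightarrow>
           cs y z \<noteq> None \<and> cs (the (cs y x)) (the (cs y z)) \<noteq> None \<and>
           cs (the (cs x y)) (the (cs x z)) = cs (the (cs y x)) (the (cs y z))"
    proof (intro ballI impI)
      fix x y z assume h: "x \<in> C" "y \<in> C" "z \<in> C"
        "cs x y \<noteq> None \<and> cs x z \<noteq> None \<and> cs (the (cs x y)) (the (cs x z)) \<noteq> None"
      then have e: "S x = S y" "S x = S z" using cs_none by auto
      then have "cs y z \<noteq> None" using h cs_none by auto
      moreover have "cs (the (cs x y)) (the (cs x z)) = cs (the (cs y x)) (the (cs y z))"
        using cs_cube h e by blast
      ultimately show "cs y z \<noteq> None \<and> cs (the (cs y x)) (the (cs y z)) \<noteq> None \<and>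
           cs (the (cs x y)) (the (cs x z)) = cs (the (cs y x)) (the (cs y z))"
        using h by simp
    qed
  qed
  have u: "unit_family V C S T cs Inr"
    unfolding unit_family_def
  proof (rule conjI; intro ballI)
    fix l assume "l \<in> V" then show "Inr l \<in> C \<and> S (Inr l) = l \<and> T (Inr l) = l"
      by (simp add: compl_arrows_def)
  next
    fix x assume "x \<in> C"
    then show "cs x (Inr (S x)) = Some (Inr (T x)) \<and> cs (Inr (S x)) x = Some x \<and>
             cs x x = Some (Inr (T x))"
    proof (cases x)
      case (Inl a)
      then have "a \<in> A" using \<open>x \<in> C\<close> by (auto simp: compl_arrows_def)
      then show ?thesis using Inl Q[of a] by simp
    next
      case (Inr l)
      then have "l \<in> V" using \<open>x \<in> C\<close> by (auto simp: compl_arrows_def)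
      then show ?thesis using Inr by simp
    qed
  qed
  have "unital V C S T cs"
    unfolding unital_def
  proof (intro exI conjI)
    show "unit_family V C S T cs Inr" by (rule u)
    show "\<forall>x\<in>C. \<forall>y\<in>C. T x = T y \<and> cs x y = Some (Inr (T x)) \<and> cs y x = Some (Inr (T x))
            \<longrightarrow> x = y"
    proof (intro ballI impI)
      fix x y assume h: "x \<in> C" "y \<in> C"
        "T x = T y \<and> cs x y = Some (Inr (T x)) \<and> cs y x = Some (Inr (T x))"
      have e1: "cs x y = Some (Inr (T x))" and e2: "cs y x = Some (Inr (T x))" using h(3) by blast+
      show "x = y"
      proof (cases x; cases y)
        fix a b assume ab: "x = Inl a" "y = Inl b"
        show ?thesis
        proof (rule ccontr)
          assume "x \<noteq> y"
          then have "a \<noteq> b" using ab by simp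
          then have "cs x y = map_option Inl (star a b) \<or> cs x y = None" using ab by simp
          moreover have "map_option Inl (star a b) \<noteq> Some (Inr (T x))" by (cases "star a b") auto
          ultimately show False using e1 by (metis option.distinct(1))
        qed
      next
        fix a b assume ab: "x = Inl a" "y = Inr b"
        have "cs (Inr b) (Inl a) \<in> {Some (Inl a), None}" by simp
        then show ?thesis using e2 ab by simp
      next
        fix a b assume ab: "x = Inr a" "y = Inl b"
        have "cs (Inr a) (Inl b) \<in> {Some (Inl b), None}" by simp
        then show ?thesis using e1 ab by simp
      next
        fix a b assume ab: "x = Inr a" "y = Inr b"
        have "cs (Inr a) (Inr b) \<noteq> None \<Longrightarrow> a = b" by (simp split: if_splits)
        then show ?thesis using e1 ab by simp
      qed
    qed
  qed
  with w u show ?thesis by blast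
qed

end
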